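(* Let $b\ge 2$. For every positive integer $N$ there exist infinitely many positive integers $M$ such that $N\cdot M$ is a $b$-wMRH number. In particular every positive integer divides some $b$-wMRH number.
   Context: Fix a base $b\ge 2$. $s_b(N)$ is the sum of the base-$b$ digits of $N$. For a positive integer $X$, its reversal $X^R$ is the integer whose base-$b$ representation is that of $X$ written in reverse order (leading zeros of the result are dropped). A positive integer $N$ is a $b$-wMRH number if there exists an integer $A\ge 0$ such that $N=(A+s_b(N))\cdot(A+s_b(N))^R$. *)

theory Defs
  imports Main
begin

fun digits :: "nat \<Rightarrow> nat \<Rightarrow> nat list" where
  "digits b n = (if n = 0 \<or> b < 2 then [] else n mod b # digits b (n div b))"

definition digit_sum :: "nat \<Rightarrow> nat \<Rightarrow> nat" where
  "digit_sum b n = sum_list (digits b n)"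

text \<open>Reversal: the number whose base-b digits (most significant first) are the
  digits of X read from least significant to most significant; leading zeros vanish.\<close>
definition reversal :: "nat \<Rightarrow> nat \<Rightarrow> nat" where
  "reversal b x = foldl (\<lambda>acc d. acc * b + d) 0 (digits b x)"

definition wMRH :: "nat \<Rightarrow> nat \<Rightarrow> bool" where
  "wMRH b N \<longleftrightarrow> N > 0 \<and>
     (\<exists>A::nat. N = (A + digit_sum b N) * reversal b (A + digit_sum b N))"

end

theory Submission
  imports Defs "HOL-Library.Infinite_Set"
begin

declare digits.simps[simp del]

lemma digits_mult_b:
  assumes "b \<ge> 2" shows "digits b (n * b) = (if n = 0 then [] else 0 # digits b n)"
  using assms by (subst digits.simps) simp

lemma digits_mult_pow:
  assumes "b \<ge> 2" "n > 0" shows "digits b (n * b ^ k) = replicate k 0 @ digits b n"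
proof (induction k)
  case 0 then show ?case by simp
next
  case (Suc k)
  have "n * b ^ Suc k = (n * b ^ k) * b" by (simp add: algebra_simps)
  moreover have "n * b ^ k > 0" using assms by simp
  ultimately show ?case using digits_mult_b[OF assms(1), of "n * b ^ k"] Suc by (simp only:) simp
qed

lemma foldl_zeros: "foldl (\<lambda>acc d. acc * b + d) 0 (replicate k 0 @ ds)
   = foldl (\<lambda>acc d. acc * b + d) (0::nat) ds"
  by (induction k) auto

lemma rev_pow: assumes "b \<ge> 2" "n > 0" shows "reversal b (n * b ^ k) = reversal b n"
  unfolding reversal_def using digits_mult_pow[OF assms] foldl_zeros by simp

lemma ds_pow: assumes "b \<ge> 2" "n > 0" shows "digit_sum b (n * b ^ k) = digit_sum b n"
  unfolding digit_sum_def using digits_mult_pow[OF assms] by simp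

lemma last_digit: assumes "b \<ge> 2" shows "n > 0 \<Longrightarrow> digits b n \<noteq> [] \<and> last (digits b n) > 0"
proof (induction n rule: less_induct)
  case (less n)
  show ?case
  proof (cases "n div b = 0")
    case True
    then have "n < b" using assms by (simp add: div_eq_0_iff)
    moreover have "digits b n = [n]" using \<open>n < b\<close> less.prems assms by (subst digits.simps) (simp add: digits.simps[of b 0])
    ultimately show ?thesis using less.prems by simp
  next
    case False
    then have "n div b < n" "n div b > 0" using assms less.prems by auto
    then have "digits b (n div b) \<noteq> [] \<and> last (digits b (n div b)) > 0" using less.IH by blast
    moreover have "digits b n = n mod b # digits b (n div b)" using less.prems assms by (subst digits.simps) simp
    ultimately show ?thesis by simp
  qed
qed

lemma foldl_ge_last: "ds \<noteq> [] \<Longrightarrow> foldl (\<lambda>acc d. acc * b + d) (a::nat) ds \<ge> last ds"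
proof (induction ds rule: rev_induct)
  case Nil then show ?case by simp
next
  case (snoc x xs) then show ?case by simp
qed

lemma rev_pos: assumes "b \<ge> 2" "n > 0" shows "reversal b n > 0"
proof -
  have "digits b n \<noteq> [] \<and> last (digits b n) > 0" using last_digit[OF assms(1) assms(2)] .
  then show ?thesis unfolding reversal_def using foldl_ge_last[of "digits b n" b 0] by linarith
qed

theorem corollary15:
  fixes b N :: nat
  assumes "b \<ge> 2" and "N > 0"
  shows "infinite {M::nat. M > 0 \<and> wMRH b (N * M)}
         \<and> (\<exists>K. N dvd K \<and> wMRH b K)"
proof -
  define R where "R = reversal b N"
  have R: "R > 0" using rev_pos assms R_def by simp
  define s where "s = digit_sum b (N * R)"
  have key: "b ^ k * R > 0 \<and> wMRH b (N * (b ^ k * R)) \<and> b ^ k * R \<ge> b ^ k" if "b ^ k \<ge> s" for k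
  proof -
    let ?X = "N * b ^ k"
    have rx: "reversal b ?X = R" using rev_pow assms R_def by simp
    have K: "N * (b ^ k * R) = ?X * R" by (simp add: algebra_simps)
    have ds: "digit_sum b (?X * R) = s"
      using ds_pow[OF assms(1), of "N * R" k] assms R s_def by (simp add: algebra_simps)
    have "?X \<ge> b ^ k" using assms by simp
    hence ge: "?X \<ge> s" using that by linarith
    have pos: "b ^ k > 0" using assms by simp
    have "N * (b ^ k * R) = (?X - s + digit_sum b (N * (b ^ k * R))) * reversal b (?X - s + digit_sum b (N * (b ^ k * R)))"
      using K ds rx ge by (simp add: mult.assoc)
    moreover have "N * (b ^ k * R) > 0" using assms R pos by simp
    ultimately show ?thesis unfolding wMRH_def using pos R by auto
  qed
  have big: "b ^ k \<ge> k" for k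
  proof -
    have "k < 2 ^ k" by (rule less_exp)
    also have "(2::nat) ^ k \<le> b ^ k" using assms by (simp add: power_mono)
    finally show ?thesis by simp
  qed
  have inf: "infinite {M::nat. M > 0 \<and> wMRH b (N * M)}"
    unfolding infinite_nat_iff_unbounded_le
  proof
    fix m
    have "b ^ (m + s) \<ge> s" "b ^ (m + s) \<ge> m" using big[of "m+s"] by auto
    then have "b ^ (m + s) * R \<ge> m" "b ^ (m + s) * R \<in> {M. 0 < M \<and> wMRH b (N * M)}"
      using key[of "m+s"] le_trans by blast+
    then show "\<exists>n\<ge>m. n \<in> {M. 0 < M \<and> wMRH b (N * M)}" by blast
  qed
  have "\<exists>K. N dvd K \<and> wMRH b K"
  proof -
    have "wMRH b (N * (b ^ s * R))" using key[of s] big[of s] by blast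
    then show ?thesis by (intro exI[of _ "N * (b ^ s * R)"]) simp
  qed
  with inf show ?thesis by blast
qed

end
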